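(* Let $n\ge4$. For $N\ge3$ let $B_N$ be the $\mathbb{Z}^N$-graded algebra $S^\bullet(V^{(1)})\otimes\cdots\otimes S^\bullet(V^{(N)})/(\sum_{i<j}R^{(i,j)})$ (equivalently $\mathcal O(\widetilde{\mathcal U}_{0,N}[\psi])$), and let $B^-_n\subset B_n$ be the sum of graded components of degrees in $\mathbb{Z}e_1+\cdots+\mathbb{Z}e_{n-1}\subset\mathbb{Z}^n$. Then there is a natural homomorphism $B_{n-1}\to B^-_n$ such that, as $\mathbb{Z}^{n-1}$-graded $B_{n-1}$-modules, $$B^-_n\simeq B_{n-1}\oplus\bigoplus_{1\le i\le n-1}\bigoplus_{a>0}B_{n-1}(-ae_i).$$
   Context: Over a field $\k$: for $1\le i\le N$, $V^{(i)}$ is the subspace of vectors with zero coordinate sum in $\bigoplus_{j\in[1,N]\setminus\{i\}}\k\,v^{(i)}_j$, placed in degree $e_i$; for $i<j$, $R^{(i,j)}\subset V^{(i)}\otimes V^{(j)}$ is spanned by $(v^{(i)}_k-v^{(i)}_j)\otimes(v^{(j)}_k-v^{(j)}_i)-(v^{(i)}_l-v^{(i)}_j)\otimes(v^{(j)}_l-v^{(j)}_i)$ for $k,l\in[1,N]\setminus\{i,j\}$. $\widetilde{\mathcal U}_{0,N}[\psi]$ is the moduli space of reduced connected genus $0$ curves with $N$ distinct smooth points $p_i$ such that $\mathcal O(\sum p_i)$ is ample, and nonzero tangent vectors at the $p_i$. $M(d)$ denotes the shift $M(d)_c=M_{c+d}$. *)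

theory Defs
  imports "HOL-Library.Poly_Mapping"
begin

text \<open>Ambient polynomial ring: the symmetric algebra of
  W = (direct sum over i, j with i ~= j of k v^(i)_j); the variable indexed by (i,j) is v^(i)_j.
  S(V^(1)) (x) ... (x) S(V^(N)) is the subalgebra generated by the V^(i).\<close>

type_synonym 'k mpoly = "(nat \<times> nat \<Rightarrow>\<^sub>0 nat) \<Rightarrow>\<^sub>0 'k"

definition var :: "nat \<Rightarrow> nat \<Rightarrow> 'k::comm_ring_1 mpoly" where
  "var i j = Poly_Mapping.single (Poly_Mapping.single (i, j) 1) 1"

definition const :: "'k::comm_ring_1 \<Rightarrow> 'k mpoly" where
  "const c = Poly_Mapping.single 0 c"

definition Vspace :: "nat \<Rightarrow> nat \<Rightarrow> 'k::comm_ring_1 mpoly set" where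
  "Vspace N i = {(\<Sum>j\<in>{1..N} - {i}. const (c j) * var i j) | c. (\<Sum>j\<in>{1..N} - {i}. c j) = 0}"

inductive_set Salg :: "nat \<Rightarrow> 'k::comm_ring_1 mpoly set" for N where
  const: "const c \<in> Salg N"
| gen: "1 \<le> i \<Longrightarrow> i \<le> N \<Longrightarrow> v \<in> Vspace N i \<Longrightarrow> v \<in> Salg N"
| add: "p \<in> Salg N \<Longrightarrow> q \<in> Salg N \<Longrightarrow> p + q \<in> Salg N"
| mult: "p \<in> Salg N \<Longrightarrow> q \<in> Salg N \<Longrightarrow> p * q \<in> Salg N"

definition Rgen :: "nat \<Rightarrow> 'k::comm_ring_1 mpoly set" where
  "Rgen N = {(var i k - var i j) * (var j k - var j i) - (var i l - var i j) * (var j l - var j i)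
             | i j k l. 1 \<le> i \<and> i < j \<and> j \<le> N \<and>
                 k \<in> {1..N} - {i, j} \<and> l \<in> {1..N} - {i, j}}"

inductive_set Rideal :: "nat \<Rightarrow> 'k::comm_ring_1 mpoly set" for N where
  zero: "0 \<in> Rideal N"
| gen: "a \<in> Salg N \<Longrightarrow> r \<in> Rgen N \<Longrightarrow> a * r \<in> Rideal N"
| add: "p \<in> Rideal N \<Longrightarrow> q \<in> Rideal N \<Longrightarrow> p + q \<in> Rideal N"

text \<open>B_N = Salg N / Rideal N. Z^N-grading: the degree of a monomial in direction e_i
  is its total exponent in the variables v^(i)_j.\<close>
definition blockdeg :: "(nat \<times> nat \<Rightarrow>\<^sub>0 nat) \<Rightarrow> nat \<Rightarrow> nat" where
  "blockdeg m i = (\<Sum>v\<in>Poly_Mapping.keys m. if fst v = i then Poly_Mapping.lookup m v else 0)"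

definition homog :: "(nat \<Rightarrow> nat) \<Rightarrow> 'k::comm_ring_1 mpoly \<Rightarrow> bool" where
  "homog d p \<longleftrightarrow> (\<forall>m\<in>Poly_Mapping.keys p. \<forall>i. blockdeg m i = d i)"

definition Bminus_rep :: "nat \<Rightarrow> 'k::comm_ring_1 mpoly set" where
  "Bminus_rep n = {p \<in> Salg n. \<forall>m\<in>Poly_Mapping.keys p. blockdeg m n = 0}"

definition shift_idx :: "nat \<Rightarrow> (nat \<times> nat) set" where
  "shift_idx n = {(i, a). 1 \<le> i \<and> i \<le> n - 1 \<and> 0 < a}"

end

theory Submission
  imports Defs "HOL-Computational_Algebra.Formal_Laurent_Series"
begin


definition mon_eval :: "('v \<Rightarrow> 'r::comm_semiring_1) \<Rightarrow> ('v \<Rightarrow>\<^sub>0 nat) \<Rightarrow> 'r" where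
  "mon_eval f m = (\<Prod>v\<in>Poly_Mapping.keys m. f v ^ Poly_Mapping.lookup m v)"

lemma mon_eval_sup:
  assumes "finite S" "Poly_Mapping.keys m \<subseteq> S"
  shows "mon_eval f m = (\<Prod>v\<in>S. f v ^ Poly_Mapping.lookup m v)"
  unfolding mon_eval_def
  by (rule prod.mono_neutral_left) (use assms in \<open>auto simp: in_keys_iff\<close>)

lemma keys_add_nat: "Poly_Mapping.keys (a + b :: 'v \<Rightarrow>\<^sub>0 nat) = Poly_Mapping.keys a \<union> Poly_Mapping.keys b"
  by (auto simp: in_keys_iff lookup_add)

lemma mon_eval_add: "mon_eval f (a + b) = mon_eval f a * mon_eval f b"
proof -
  let ?S = "Poly_Mapping.keys a \<union> Poly_Mapping.keys b"
  have "mon_eval f (a + b) = (\<Prod>v\<in>?S. f v ^ Poly_Mapping.lookup (a+b) v)"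
    by (rule mon_eval_sup) (auto simp: keys_add_nat)
  also have "\<dots> = (\<Prod>v\<in>?S. f v ^ Poly_Mapping.lookup a v * f v ^ Poly_Mapping.lookup b v)"
    by (simp add: lookup_add power_add)
  also have "\<dots> = mon_eval f a * mon_eval f b"
    by (simp add: prod.distrib mon_eval_sup[of ?S])
  finally show ?thesis .
qed

lemma mon_eval_zero [simp]: "mon_eval f 0 = 1"
  by (simp add: mon_eval_def)

lemma mon_eval_single1 [simp]: "mon_eval f (Poly_Mapping.single v 1) = f v"
  by (simp add: mon_eval_def)

lemma poly_as_sum: "p = (\<Sum>m\<in>Poly_Mapping.keys p. Poly_Mapping.single m (Poly_Mapping.lookup p m))"
proof (rule poly_mapping_eqI)
  fix k
  show "Poly_Mapping.lookup p k = Poly_Mapping.lookup (\<Sum>m\<in>Poly_Mapping.keys p. Poly_Mapping.single m (Poly_Mapping.lookup p m)) k"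
    by (cases "k \<in> Poly_Mapping.keys p")
       (auto simp: lookup_sum lookup_single when_def in_keys_iff)
qed

locale coefhom =
  fixes h :: "'k::comm_ring_1 \<Rightarrow> 'r::comm_ring_1"
  assumes h0: "h 0 = 0" and h1: "h 1 = 1" and hadd: "\<And>a b. h (a + b) = h a + h b"
    and hmult: "\<And>a b. h (a * b) = h a * h b"
begin

definition evalP :: "('v \<Rightarrow> 'r) \<Rightarrow> (('v \<Rightarrow>\<^sub>0 nat) \<Rightarrow>\<^sub>0 'k) \<Rightarrow> 'r" where
  "evalP f p = (\<Sum>m\<in>Poly_Mapping.keys p. h (Poly_Mapping.lookup p m) * mon_eval f m)"

lemma evalP_sup:
  assumes "finite S" "Poly_Mapping.keys p \<subseteq> S"
  shows "evalP f p = (\<Sum>m\<in>S. h (Poly_Mapping.lookup p m) * mon_eval f m)"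
  unfolding evalP_def
  by (rule sum.mono_neutral_left) (use assms in \<open>auto simp: in_keys_iff h0\<close>)

lemma evalP_add: "evalP f (p + q) = evalP f p + evalP f q"
proof -
  let ?S = "Poly_Mapping.keys p \<union> Poly_Mapping.keys q"
  have "evalP f (p + q) = (\<Sum>m\<in>?S. h (Poly_Mapping.lookup (p+q) m) * mon_eval f m)"
    by (rule evalP_sup) (simp_all add: keys_add)
  also have "\<dots> = (\<Sum>m\<in>?S. h (Poly_Mapping.lookup p m) * mon_eval f m + h (Poly_Mapping.lookup q m) * mon_eval f m)"
    by (simp add: lookup_add hadd algebra_simps)
  also have "\<dots> = evalP f p + evalP f q"
    by (simp add: sum.distrib evalP_sup[of ?S])
  finally show ?thesis .
qed

lemma evalP_zero [simp]: "evalP f 0 = 0"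
  by (simp add: evalP_def)

lemma evalP_single: "evalP f (Poly_Mapping.single m c) = h c * mon_eval f m"
  by (subst evalP_sup[of "{m}"]) (auto simp: lookup_single)

lemma evalP_sum: "evalP f (\<Sum>x\<in>A. g x) = (\<Sum>x\<in>A. evalP f (g x))"
  by (induction A rule: infinite_finite_induct) (auto simp: evalP_add)

lemma evalP_mult: "evalP f (p * q) = evalP f p * evalP f q"
proof -
  have "p * q = (\<Sum>m\<in>Poly_Mapping.keys p. Poly_Mapping.single m (Poly_Mapping.lookup p m)) *
                (\<Sum>m'\<in>Poly_Mapping.keys q. Poly_Mapping.single m' (Poly_Mapping.lookup q m'))"
    using poly_as_sum[of p] poly_as_sum[of q] by simp
  also have "\<dots> = (\<Sum>m\<in>Poly_Mapping.keys p. \<Sum>m'\<in>Poly_Mapping.keys q.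
      Poly_Mapping.single (m + m') (Poly_Mapping.lookup p m * Poly_Mapping.lookup q m'))"
    by (simp add: sum_product mult_single)
  finally have "evalP f (p * q) = (\<Sum>m\<in>Poly_Mapping.keys p. \<Sum>m'\<in>Poly_Mapping.keys q.
      (h (Poly_Mapping.lookup p m) * mon_eval f m) * (h (Poly_Mapping.lookup q m') * mon_eval f m'))"
    by (simp add: evalP_sum evalP_single hmult mon_eval_add algebra_simps)
  also have "\<dots> = evalP f p * evalP f q"
    by (simp add: evalP_def sum_product)
  finally show ?thesis .
qed

lemma evalP_uminus: "evalP f (- p) = - evalP f p"
proof -
  have "evalP f (- p) + evalP f p = 0" by (simp flip: evalP_add)
  then show ?thesis by (simp add: eq_neg_iff_add_eq_0)
qed

lemma evalP_diff: "evalP f (p - q) = evalP f p - evalP f q"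
  using evalP_add[of f p "- q"] by (simp add: evalP_uminus)

lemma evalP_one: "evalP f 1 = 1"
  by (simp add: evalP_single h1 flip: single_one)

lemma evalP_power: "evalP f (p ^ n) = evalP f p ^ n"
  by (induction n) (auto simp: evalP_one evalP_mult)

lemma evalP_const: "evalP f (const c) = h c"
  by (simp add: const_def evalP_single)

lemma evalP_var: "evalP f (var i j) = f (i, j)"
  by (simp add: var_def evalP_single h1 mon_eval_def)

end

lemma const_hom:
  "const (0::'k::comm_ring_1) = 0" "const (1::'k) = 1" "const (a + b) = const a + const (b::'k)"
  "const (a * b) = const a * const (b::'k)"
  by (simp_all add: const_def single_add mult_single flip: single_one)

interpretation cP: coefhom "const :: 'k::comm_ring_1 \<Rightarrow> 'k mpoly"
  by unfold_locales (simp_all add: const_hom)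

interpretation cF: coefhom "\<lambda>c. fls_const (const c :: 'k::comm_ring_1 mpoly)"
  by unfold_locales (simp_all add: const_hom fls_plus_const)


lemma const_diff: "const (a - b) = const a - const (b::'k::comm_ring_1)"
  by (simp add: const_def single_diff)
lemma const_uminus: "const (- a) = - const (a::'k::comm_ring_1)"
  by (simp add: const_def single_uminus)
lemma const_sum: "const (\<Sum>x\<in>A. g x) = (\<Sum>x\<in>A. const (g x :: 'k::comm_ring_1))"
  by (induction A rule: infinite_finite_induct) (auto simp: const_hom)

lemma Salg_zero: "0 \<in> Salg N"
  using Salg.const[of 0 N] by (simp add: const_hom)
lemma Salg_one: "1 \<in> Salg N"
  using Salg.const[of 1 N] by (simp add: const_hom)
lemma const_m1: "const (-1) = (-1 :: 'k::comm_ring_1 mpoly)"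
  unfolding const_uminus by (simp add: const_hom)
lemma Salg_uminus: assumes "p \<in> Salg N" shows "- p \<in> Salg N"
proof -
  have "const (-1) * p \<in> Salg N" by (rule Salg.mult[OF Salg.const assms])
  then show ?thesis unfolding const_m1 by simp
qed
lemma Salg_diff: assumes "p \<in> Salg N" "q \<in> Salg N" shows "p - q \<in> Salg N"
  using Salg.add[OF assms(1) Salg_uminus[OF assms(2)]] by simp
lemma Salg_sum: "(\<And>x. x \<in> A \<Longrightarrow> g x \<in> Salg N) \<Longrightarrow> (\<Sum>x\<in>A. g x) \<in> Salg N"
  by (induction A rule: infinite_finite_induct) (auto intro: Salg_zero Salg.add)
lemma Salg_prod: "(\<And>x. x \<in> A \<Longrightarrow> g x \<in> Salg N) \<Longrightarrow> (\<Prod>x\<in>A. g x) \<in> Salg N"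
  by (induction A rule: infinite_finite_induct) (auto intro: Salg_one Salg.mult)
lemma Salg_power: "p \<in> Salg N \<Longrightarrow> p ^ k \<in> Salg N"
  by (induction k) (auto intro: Salg_one Salg.mult)

lemma Vspace_diff:
  assumes "j \<in> {1..N} - {i}" "k \<in> {1..N} - {i}"
  shows "var i j - var i k \<in> Vspace N i"
proof -
  let ?S = "{1..N} - {i}"
  define c where "c x = (if x = j then 1 else 0) - (if x = k then 1 else (0::'a))" for x
  have s: "(\<Sum>x\<in>?S. c x) = 0" using assms by (simp add: c_def sum_subtractf)
  have "(\<Sum>x\<in>?S. const (c x) * var i x) = (\<Sum>x\<in>?S. (if x = j then var i x else 0) - (if x = k then var i x else 0))"
    by (rule sum.cong) (auto simp: c_def const_diff const_hom)
  also have "\<dots> = var i j - var i k" using assms by (simp add: sum_subtractf)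
  finally have eq: "var i j - var i k = (\<Sum>x\<in>?S. const (c x) * var i x)" by simp
  show ?thesis unfolding Vspace_def using s eq by blast
qed

lemma Vspace_Salg: "1 \<le> i \<Longrightarrow> i \<le> N \<Longrightarrow> j \<in> {1..N} - {i} \<Longrightarrow> k \<in> {1..N} - {i} \<Longrightarrow>
   var i j - var i k \<in> Salg N"
  by (rule Salg.gen[OF _ _ Vspace_diff]) auto

lemma Vspace_mono:
  assumes "N \<le> N'" "v \<in> Vspace N i" shows "v \<in> Vspace N' i"
proof -
  obtain c where v: "v = (\<Sum>j\<in>{1..N} - {i}. const (c j) * var i j)" and s: "(\<Sum>j\<in>{1..N} - {i}. c j) = 0"
    using assms(2) unfolding Vspace_def by blast
  define c' where "c' j = (if j \<le> N then c j else 0)" for j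
  have "(\<Sum>j\<in>{1..N'} - {i}. c' j) = (\<Sum>j\<in>{1..N} - {i}. c' j)"
    by (rule sum.mono_neutral_right) (use assms in \<open>auto simp: c'_def\<close>)
  also have "\<dots> = 0" using s by (simp add: c'_def)
  finally have s': "(\<Sum>j\<in>{1..N'} - {i}. c' j) = 0" .
  have "(\<Sum>j\<in>{1..N'} - {i}. const (c' j) * var i j) = (\<Sum>j\<in>{1..N} - {i}. const (c' j) * var i j)"
    by (rule sum.mono_neutral_right) (use assms in \<open>auto simp: c'_def const_hom\<close>)
  also have "\<dots> = v" using v by (simp add: c'_def)
  finally show ?thesis unfolding Vspace_def using s' by blast
qed

lemma Salg_mono: assumes "N \<le> N'" "p \<in> Salg N" shows "p \<in> Salg N'"
  using assms(2)
proof (induction p rule: Salg.induct)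
  case (gen i v) show ?case by (rule Salg.gen[of i N' v]) (use gen Vspace_mono[OF assms(1)] assms(1) in auto)
qed (auto intro: Salg.intros)

lemma Rgen_Salg: assumes "r \<in> Rgen N" shows "r \<in> Salg N"
proof -
  obtain i j k l where r: "r = (var i k - var i j) * (var j k - var j i) - (var i l - var i j) * (var j l - var j i)"
    and h: "1 \<le> i" "i < j" "j \<le> N" "k \<in> {1..N} - {i, j}" "l \<in> {1..N} - {i, j}"
    using assms unfolding Rgen_def by blast
  have a: "var i k - var i j \<in> Salg N" "var j k - var j i \<in> Salg N"
     "var i l - var i j \<in> Salg N" "var j l - var j i \<in> Salg N"
    using h by (auto intro!: Vspace_Salg)
  show ?thesis unfolding r by (intro Salg_diff Salg.mult a)
qed

lemma Rgen_mono: "N \<le> N' \<Longrightarrow> Rgen N \<subseteq> Rgen N'"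
  unfolding Rgen_def by fastforce

lemma Rideal_mult: "p \<in> Rideal N \<Longrightarrow> s \<in> Salg N \<Longrightarrow> s * p \<in> Rideal N"
proof (induction p rule: Rideal.induct)
  case zero then show ?case by (simp add: Rideal.zero)
next
  case (gen a r) then show ?case using Rideal.gen[OF Salg.mult[OF gen(3) gen(1)] gen(2)] by (simp add: mult.assoc)
next
  case (add p q) then show ?case using Rideal.add by (simp add: distrib_left)
qed

lemma Rideal_uminus: assumes "p \<in> Rideal N" shows "- p \<in> Rideal N"
proof -
  have "const (-1) * p \<in> Rideal N" by (rule Rideal_mult[OF assms Salg.const])
  then show ?thesis unfolding const_m1 by simp
qed
lemma Rideal_diff: assumes "p \<in> Rideal N" "q \<in> Rideal N" shows "p - q \<in> Rideal N"
  using Rideal.add[OF assms(1) Rideal_uminus[OF assms(2)]] by simp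
lemma Rideal_sum: "(\<And>x. x \<in> A \<Longrightarrow> g x \<in> Rideal N) \<Longrightarrow> (\<Sum>x\<in>A. g x) \<in> Rideal N"
  by (induction A rule: infinite_finite_induct) (auto intro: Rideal.zero Rideal.add)
lemma Rgen_Rideal: assumes "r \<in> Rgen N" shows "r \<in> Rideal N"
  using Rideal.gen[OF Salg_one assms] by simp
lemma Rideal_mono: assumes "N \<le> N'" "p \<in> Rideal N" shows "p \<in> Rideal N'"
  using assms(2)
proof (induction p rule: Rideal.induct)
  case (gen a r) then show ?case using Salg_mono[OF assms(1)] Rgen_mono[OF assms(1)] by (intro Rideal.gen) auto
qed (auto intro: Rideal.intros)

inductive_set Jp :: "nat \<Rightarrow> 'k::comm_ring_1 mpoly set" for N where
  zero: "0 \<in> Jp N"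
| gen: "r \<in> Rgen N \<Longrightarrow> a * r \<in> Jp N"
| add: "p \<in> Jp N \<Longrightarrow> q \<in> Jp N \<Longrightarrow> p + q \<in> Jp N"

lemma Jp_mult: "p \<in> Jp N \<Longrightarrow> s * p \<in> Jp N"
proof (induction p rule: Jp.induct)
  case zero then show ?case by (simp add: Jp.zero)
next
  case (gen r a) then show ?case using Jp.gen[OF gen(1), of "s * a"] by (simp add: mult.assoc)
next
  case (add p q) then show ?case using Jp.add by (simp add: distrib_left)
qed
lemma Jp_mult2: "p \<in> Jp N \<Longrightarrow> p * s \<in> Jp N"
  using Jp_mult by (simp add: mult.commute)
lemma Jp_uminus: assumes "p \<in> Jp N" shows "- p \<in> Jp N"
  using Jp_mult[OF assms, of "-1"] by simp
lemma Jp_diff: assumes "p \<in> Jp N" "q \<in> Jp N" shows "p - q \<in> Jp N"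
  using Jp.add[OF assms(1) Jp_uminus[OF assms(2)]] by simp
lemma Jp_sum: "(\<And>x. x \<in> A \<Longrightarrow> g x \<in> Jp N) \<Longrightarrow> (\<Sum>x\<in>A. g x) \<in> Jp N"
  by (induction A rule: infinite_finite_induct) (auto intro: Jp.zero Jp.add)
lemma Rgen_Jp: assumes "r \<in> Rgen N" shows "r \<in> Jp N"
  using Jp.gen[OF assms, of 1] by simp
lemma Rideal_Jp: "p \<in> Rideal N \<Longrightarrow> p \<in> Jp N"
  by (induction p rule: Rideal.induct) (auto intro: Jp.intros)

definition rr :: "nat \<Rightarrow> nat" where "rr i = (if i = 1 then 2 else 1)"

lemma rr_in: "2 \<le> N \<Longrightarrow> 1 \<le> i \<Longrightarrow> i \<le> N \<Longrightarrow> rr i \<in> {1..N} - {i}"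
  by (auto simp: rr_def)

definition good :: "nat \<Rightarrow> nat \<times> nat \<Rightarrow> bool" where
  "good N v \<longleftrightarrow> fst v \<in> {1..N} \<and> snd v \<in> {1..N} - {fst v}"

definition tauf :: "nat \<Rightarrow> nat \<times> nat \<Rightarrow> 'k::comm_ring_1 mpoly" where
  "tauf N v = (if good N v then var (fst v) (snd v) - var (fst v) (rr (fst v)) else 0)"

lemma tau_in_Salg:
  assumes "2 \<le> N" shows "cP.evalP (tauf N) p \<in> Salg N"
proof -
  have f: "tauf N v \<in> Salg N" for v
  proof (cases "good N v")
    case True
    then have "rr (fst v) \<in> {1..N} - {fst v}" using rr_in[OF assms, of "fst v"] by (auto simp: good_def)
    then show ?thesis using True by (auto simp: tauf_def good_def intro!: Vspace_Salg)
  qed (simp add: tauf_def Salg_zero)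
  show ?thesis unfolding cP.evalP_def mon_eval_def
    by (intro Salg_sum Salg.mult Salg.const Salg_prod Salg_power f)
qed

lemma tau_fix:
  assumes "2 \<le> N" "q \<in> Salg N" shows "cP.evalP (tauf N) q = q"
  using assms(2)
proof (induction q rule: Salg.induct)
  case (const c) then show ?case by (simp add: cP.evalP_const)
next
  case (gen i v)
  then obtain c where v: "v = (\<Sum>j\<in>{1..N} - {i}. const (c j) * var i j)" and s: "(\<Sum>j\<in>{1..N} - {i}. c j) = 0"
    unfolding Vspace_def by blast
  have "cP.evalP (tauf N) v = (\<Sum>j\<in>{1..N} - {i}. const (c j) * (var i j - var i (rr i)))"
    using gen by (simp add: v cP.evalP_sum cP.evalP_mult cP.evalP_const cP.evalP_var tauf_def good_def)
  also have "\<dots> = v - (\<Sum>j\<in>{1..N} - {i}. const (c j)) * var i (rr i)"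
    by (simp add: v right_diff_distrib sum_subtractf sum_distrib_right)
  also have "\<dots> = v" using s by (simp add: const_sum[symmetric] const_hom)
  finally show ?case .
qed (auto simp: cP.evalP_add cP.evalP_mult)

lemma Jp_Salg_Rideal:
  assumes "2 \<le> N" "q \<in> Salg N" "q \<in> Jp N" shows "q \<in> Rideal N"
proof -
  have "cP.evalP (tauf N) p \<in> Rideal N" if "p \<in> Jp N" for p :: "'a mpoly"
    using that
  proof (induction p rule: Jp.induct)
    case zero then show ?case by (simp add: Rideal.zero)
  next
    case (gen r a)
    have "cP.evalP (tauf N) (a * r) = cP.evalP (tauf N) a * r"
      using tau_fix[OF assms(1) Rgen_Salg[OF gen]] by (simp add: cP.evalP_mult)
    then show ?case using Rideal.gen[OF tau_in_Salg[OF assms(1)] gen] by simp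
  next
    case (add p q) then show ?case by (simp add: cP.evalP_add Rideal.add)
  qed
  with assms tau_fix show ?thesis by metis
qed


definition T :: "nat \<Rightarrow> nat \<Rightarrow> 'k::comm_ring_1 mpoly" where
  "T n i = var i n - var i (rr i)"

definition bb :: "nat \<Rightarrow> nat \<times> nat \<Rightarrow> 'k::comm_ring_1 mpoly" where
  "bb n x = T n (fst x) ^ snd x"

definition al :: "nat \<Rightarrow> nat \<Rightarrow> 'k::comm_ring_1 mpoly" where
  "al i j = var i j - var i (rr i)"

definition ll :: "nat \<Rightarrow> nat \<Rightarrow> nat" where
  "ll i j = (if 1 \<notin> {i, j} then 1 else if 2 \<notin> {i, j} then 2 else 3)"

lemma ll_in: "3 \<le> m \<Longrightarrow> ll i j \<in> {1..m} - {i, j}"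
  by (auto simp: ll_def)

definition be :: "nat \<Rightarrow> nat \<Rightarrow> 'k::comm_ring_1 mpoly" where
  "be i j = (var i (ll i j) - var i j) * (var j (ll i j) - var j i)"

definition Rep :: "nat \<Rightarrow> 'k::comm_ring_1 mpoly \<Rightarrow> bool" where
  "Rep n q \<longleftrightarrow> (\<exists>c0 c. c0 \<in> Salg (n - 1) \<and> finite {x. c x \<noteq> 0} \<and> {x. c x \<noteq> 0} \<subseteq> shift_idx n \<and>
        (\<forall>x. c x \<in> Salg (n - 1)) \<and>
        q - (c0 * 1 + (\<Sum>x\<in>{x. c x \<noteq> 0}. c x * bb n x)) \<in> Rideal n)"

lemma sum_supp:
  assumes "finite F" "{x. c x \<noteq> 0} \<subseteq> F"
  shows "(\<Sum>x\<in>{x. c x \<noteq> 0}. c x * (g x :: 'a::comm_ring_1)) = (\<Sum>x\<in>F. c x * g x)"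
  by (rule sum.mono_neutral_left) (use assms in auto)

context
  fixes n :: nat
  assumes n4: "4 \<le> n"
begin

lemma T_Salg: "1 \<le> i \<Longrightarrow> i \<le> n - 1 \<Longrightarrow> T n i \<in> Salg n"
  unfolding T_def using n4 by (intro Vspace_Salg) (auto simp: rr_def)

lemma al_Salg: "1 \<le> i \<Longrightarrow> i \<le> n - 1 \<Longrightarrow> j \<in> {1..n-1} - {i} \<Longrightarrow> al i j \<in> Salg (n - 1)"
  unfolding al_def using n4 by (intro Vspace_Salg) (auto simp: rr_def)

lemma be_Salg: "1 \<le> i \<Longrightarrow> i \<le> n - 1 \<Longrightarrow> j \<in> {1..n-1} - {i} \<Longrightarrow> be i j \<in> Salg (n - 1)"
proof -
  have l0: "ll i j \<in> {1..n-1} - {i, j}" by (rule ll_in) (use n4 in simp)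
  assume a: "1 \<le> i" "i \<le> n - 1" "j \<in> {1..n-1} - {i}"
  show ?thesis unfolding be_def using l0 a by (intro Salg.mult Vspace_Salg) auto
qed

lemma Rep_Salg: "q \<in> Salg (n - 1) \<Longrightarrow> Rep n q"
  unfolding Rep_def
  by (rule exI[of _ q], rule exI[of _ "\<lambda>_. 0"]) (auto intro: Salg_zero Rideal.zero)

lemma Rep_add: assumes "Rep n q" "Rep n q'" shows "Rep n (q + q')"
proof -
  obtain c0 c where c: "c0 \<in> Salg (n - 1)" "finite {x. c x \<noteq> 0}" "{x. c x \<noteq> 0} \<subseteq> shift_idx n"
     "\<forall>x. c x \<in> Salg (n - 1)" "q - (c0 * 1 + (\<Sum>x\<in>{x. c x \<noteq> 0}. c x * bb n x)) \<in> Rideal n"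
    using assms(1) unfolding Rep_def by blast
  obtain c0' c' where c': "c0' \<in> Salg (n - 1)" "finite {x. c' x \<noteq> 0}" "{x. c' x \<noteq> 0} \<subseteq> shift_idx n"
     "\<forall>x. c' x \<in> Salg (n - 1)" "q' - (c0' * 1 + (\<Sum>x\<in>{x. c' x \<noteq> 0}. c' x * bb n x)) \<in> Rideal n"
    using assms(2) unfolding Rep_def by blast
  let ?U = "{x. c x \<noteq> 0} \<union> {x. c' x \<noteq> 0}"
  define d where "d x = c x + c' x" for x
  have sub: "{x. d x \<noteq> 0} \<subseteq> ?U" by (auto simp: d_def)
  have fin: "finite ?U" using c c' by auto
  have "(\<Sum>x\<in>{x. d x \<noteq> 0}. d x * bb n x) = (\<Sum>x\<in>?U. d x * bb n x)"
    by (rule sum_supp[OF fin sub])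
  also have "\<dots> = (\<Sum>x\<in>?U. c x * bb n x) + (\<Sum>x\<in>?U. c' x * bb n x)"
    by (simp add: d_def distrib_right sum.distrib)
  also have "\<dots> = (\<Sum>x\<in>{x. c x \<noteq> 0}. c x * bb n x) + (\<Sum>x\<in>{x. c' x \<noteq> 0}. c' x * bb n x)"
    using sum_supp[OF fin, of c "bb n"] sum_supp[OF fin, of c' "bb n"] by auto
  finally have eq: "(\<Sum>x\<in>{x. d x \<noteq> 0}. d x * bb n x) = \<dots>" .
  show ?thesis unfolding Rep_def
  proof (intro exI[of _ "c0 + c0'"] exI[of _ d] conjI)
    show "c0 + c0' \<in> Salg (n - 1)" using c c' by (auto intro: Salg.add)
    show "finite {x. d x \<noteq> 0}" using fin sub finite_subset by blast
    show "{x. d x \<noteq> 0} \<subseteq> shift_idx n" using sub c c' by blast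
    show "\<forall>x. d x \<in> Salg (n - 1)" using c c' by (auto simp: d_def intro: Salg.add)
    show "q + q' - ((c0 + c0') * 1 + (\<Sum>x\<in>{x. d x \<noteq> 0}. d x * bb n x)) \<in> Rideal n"
      using Rideal.add[OF c(5) c'(5)] unfolding eq by (simp add: algebra_simps)
  qed
qed

lemma Rep_mult: assumes "Rep n q" "s \<in> Salg (n - 1)" shows "Rep n (s * q)"
proof -
  obtain c0 c where c: "c0 \<in> Salg (n - 1)" "finite {x. c x \<noteq> 0}" "{x. c x \<noteq> 0} \<subseteq> shift_idx n"
     "\<forall>x. c x \<in> Salg (n - 1)" "q - (c0 * 1 + (\<Sum>x\<in>{x. c x \<noteq> 0}. c x * bb n x)) \<in> Rideal n"
    using assms(1) unfolding Rep_def by blast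
  define d where "d x = s * c x" for x
  have sub: "{x. d x \<noteq> 0} \<subseteq> {x. c x \<noteq> 0}" by (auto simp: d_def)
  have "(\<Sum>x\<in>{x. d x \<noteq> 0}. d x * bb n x) = (\<Sum>x\<in>{x. c x \<noteq> 0}. d x * bb n x)"
    by (rule sum_supp[OF c(2) sub])
  also have "\<dots> = s * (\<Sum>x\<in>{x. c x \<noteq> 0}. c x * bb n x)"
    by (simp add: d_def sum_distrib_left mult.assoc)
  finally have eq: "(\<Sum>x\<in>{x. d x \<noteq> 0}. d x * bb n x) = \<dots>" .
  have sn: "s \<in> Salg n" using Salg_mono[OF _ assms(2)] by simp
  show ?thesis unfolding Rep_def
  proof (intro exI[of _ "s * c0"] exI[of _ d] conjI)
    show "s * c0 \<in> Salg (n - 1)" using c assms by (auto intro: Salg.mult)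
    show "finite {x. d x \<noteq> 0}" using c sub finite_subset by blast
    show "{x. d x \<noteq> 0} \<subseteq> shift_idx n" using sub c by blast
    show "\<forall>x. d x \<in> Salg (n - 1)" using c assms by (auto simp: d_def intro: Salg.mult)
    show "s * q - (s * c0 * 1 + (\<Sum>x\<in>{x. d x \<noteq> 0}. d x * bb n x)) \<in> Rideal n"
      using Rideal_mult[OF c(5) sn] unfolding eq by (simp add: algebra_simps)
  qed
qed

lemma Rep_ideal: assumes "Rep n q" "q' - q \<in> Rideal n" shows "Rep n q'"
proof -
  obtain c0 c where c: "c0 \<in> Salg (n - 1)" "finite {x. c x \<noteq> 0}" "{x. c x \<noteq> 0} \<subseteq> shift_idx n"
     "\<forall>x. c x \<in> Salg (n - 1)" "q - (c0 * 1 + (\<Sum>x\<in>{x. c x \<noteq> 0}. c x * bb n x)) \<in> Rideal n"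
    using assms(1) unfolding Rep_def by blast
  have "q' - (c0 * 1 + (\<Sum>x\<in>{x. c x \<noteq> 0}. c x * bb n x))
      = (q' - q) + (q - (c0 * 1 + (\<Sum>x\<in>{x. c x \<noteq> 0}. c x * bb n x)))" by simp
  also have "\<dots> \<in> Rideal n" by (rule Rideal.add[OF assms(2) c(5)])
  finally show ?thesis unfolding Rep_def using c(1-4) by blast
qed

lemma Rep_sum: "(\<And>x. x \<in> A \<Longrightarrow> Rep n (g x)) \<Longrightarrow> Rep n (\<Sum>x\<in>A. g x)"
  by (induction A rule: infinite_finite_induct) (auto intro: Rep_add Rep_Salg Salg_zero)

lemma Rep_T: assumes "1 \<le> i" "i \<le> n - 1" "0 < a" shows "Rep n (T n i ^ a :: 'k::field mpoly)"
  unfolding Rep_def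
proof (intro exI[of _ 0] exI[of _ "\<lambda>x. if x = (i, a) then 1 else 0"] conjI)
  have s: "{x. (if x = (i, a) then 1 else 0 :: 'k mpoly) \<noteq> 0} = {(i, a)}" by auto
  show "finite {x. (if x = (i, a) then 1 else 0 :: 'k mpoly) \<noteq> 0}" unfolding s by simp
  show "{x. (if x = (i, a) then 1 else 0 :: 'k mpoly) \<noteq> 0} \<subseteq> shift_idx n" unfolding s
    using assms by (auto simp: shift_idx_def)
  show "\<forall>x. (if x = (i, a) then 1 else 0 :: 'k mpoly) \<in> Salg (n - 1)" by (auto intro: Salg_zero Salg_one)
  show "(0::'k mpoly) \<in> Salg (n - 1)" by (rule Salg_zero)
  show "T n i ^ a - (0 * 1 + (\<Sum>x\<in>{x. (if x = (i, a) then 1 else 0 :: 'k mpoly) \<noteq> 0}. (if x = (i, a) then 1 else 0) * bb n x)) \<in> Rideal n"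
    unfolding s by (simp add: bb_def Rideal.zero)
qed

lemma Rep_T': assumes "1 \<le> i" "i \<le> n - 1" shows "Rep n (T n i ^ a :: 'k::field mpoly)"
  using Rep_T[OF assms, of a] Rep_Salg[OF Salg_one] by (cases a) auto

lemma T_rel:
  assumes "1 \<le> i" "i \<le> n - 1" "1 \<le> j" "j \<le> n - 1" "i \<noteq> j"
  shows "T n i * T n j - (al j i * T n i + al i j * T n j + (be i j - al i j * al j i)) \<in> Rideal n"
proof -
  have l0: "ll i j \<in> {1..n-1} - {i, j}" by (rule ll_in) (use n4 in simp)
  then have l: "ll i j \<in> {1..n} - {i, j}" by auto
  have eq: "T n i * T n j - (al j i * T n i + al i j * T n j + (be i j - al i j * al j i))
      = (var i n - var i j) * (var j n - var j i) - (var i (ll i j) - var i j) * (var j (ll i j) - var j i)"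
    by (simp add: T_def al_def be_def algebra_simps)
  have "(var i n - var i j) * (var j n - var j i) - (var i (ll i j) - var i j) * (var j (ll i j) - var j i)
     \<in> (Rgen n :: 'a mpoly set)"
  proof (cases "i < j")
    case True then show ?thesis unfolding Rgen_def using assms l n4
      by (intro CollectI exI[of _ i] exI[of _ j] exI[of _ n] exI[of _ "ll i j"]) auto
  next
    case False
    have "(var i n - var i j) * (var j n - var j i) - (var i (ll i j) - var i j) * (var j (ll i j) - var j i)
       = (var j n - var j i) * (var i n - var i j) - (var j (ll i j) - var j i) * (var i (ll i j) - var i j)"
      by (simp add: algebra_simps)
    also have "\<dots> \<in> Rgen n" using False unfolding Rgen_def using assms l n4
      by (intro CollectI exI[of _ j] exI[of _ i] exI[of _ n] exI[of _ "ll i j"]) auto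
    finally show ?thesis .
  qed
  then show ?thesis unfolding eq by (rule Rgen_Rideal)
qed


lemma Rep_TT:
  assumes "1 \<le> j" "j \<le> n - 1" "1 \<le> i" "i \<le> n - 1"
  shows "Rep n (T n j * T n i ^ a :: 'k::field mpoly)"
proof (induction a)
  case 0 show ?case using Rep_T[OF assms(1,2), of 1] by simp
next
  case (Suc a)
  show ?case
  proof (cases "i = j")
    case True
    then show ?thesis using Rep_T[OF assms(1,2), of "Suc (Suc a)"] by (simp add: mult.assoc)
  next
    case False
    have ij: "i \<in> {1..n-1} - {j}" "j \<in> {1..n-1} - {i}" using assms False by auto
    let ?L = "al j i * T n i ^ Suc a + al i j * (T n j * T n i ^ a) + (be i j - al i j * al j i) * T n i ^ a :: 'k mpoly"
    have RL: "Rep n ?L"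
      by (intro Rep_add Rep_mult Rep_T' Suc assms al_Salg be_Salg Salg_diff Salg.mult ij)
    have "T n j * T n i ^ Suc a - ?L
       = T n i ^ a * (T n i * T n j - (al j i * T n i + al i j * T n j + (be i j - al i j * al j i)))"
      by (simp add: algebra_simps)
    also have "\<dots> \<in> Rideal n"
      by (rule Rideal_mult[OF T_rel Salg_power[OF T_Salg]]) (use assms False in auto)
    finally show ?thesis by (rule Rep_ideal[OF RL])
  qed
qed

lemma Rep_Tmul:
  assumes "Rep n q" "1 \<le> j" "j \<le> n - 1"
  shows "Rep n (T n j * q :: 'k::field mpoly)"
proof -
  obtain c0 c where c: "c0 \<in> Salg (n - 1)" "finite {x. c x \<noteq> 0}" "{x. c x \<noteq> 0} \<subseteq> shift_idx n"
     "\<forall>x. c x \<in> Salg (n - 1)" "q - (c0 * 1 + (\<Sum>x\<in>{x. c x \<noteq> 0}. c x * bb n x)) \<in> Rideal n"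
    using assms(1) unfolding Rep_def by blast
  let ?S = "{x. c x \<noteq> 0}"
  let ?q = "c0 * T n j ^ 1 + (\<Sum>x\<in>?S. c x * (T n j * T n (fst x) ^ snd x))"
  have r1: "Rep n (c0 * T n j ^ 1)" by (rule Rep_mult[OF Rep_T[OF assms(2,3)] c(1)]) simp
  have r2: "Rep n (\<Sum>x\<in>?S. c x * (T n j * T n (fst x) ^ snd x))"
  proof (rule Rep_sum)
    fix x assume x: "x \<in> ?S"
    then have x1: "1 \<le> fst x" "fst x \<le> n - 1" using c(3) by (auto simp: shift_idx_def)
    show "Rep n (c x * (T n j * T n (fst x) ^ snd x))"
      using Rep_mult[OF Rep_TT[OF assms(2,3) x1] spec[OF c(4), of x]] .
  qed
  have rq: "Rep n ?q" by (rule Rep_add[OF r1 r2])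
  have eq: "T n j * q - ?q = T n j * (q - (c0 * 1 + (\<Sum>x\<in>?S. c x * bb n x)))"
  proof -
    have e1: "T n j * (\<Sum>x\<in>?S. c x * bb n x) = (\<Sum>x\<in>?S. c x * (T n j * T n (fst x) ^ snd x))"
      unfolding sum_distrib_left bb_def by (rule sum.cong) (simp_all add: mult.left_commute)
    have aux: "(t::'k mpoly) * (q - (c0 * 1 + S)) = t * q - (c0 * t ^ 1 + t * S)" for t S
      by (simp add: algebra_simps)
    show ?thesis unfolding aux e1 ..
  qed
  have mem: "T n j * (q - (c0 * 1 + (\<Sum>x\<in>?S. c x * bb n x))) \<in> Rideal n"
    by (rule Rideal_mult[OF c(5) T_Salg[OF assms(2,3)]])
  show ?thesis by (rule Rep_ideal[OF rq]) (subst eq, rule mem)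
qed

lemma Rep_Gmul:
  assumes "Rep n q" "g \<in> Salg (n - 1) \<or> (\<exists>i. 1 \<le> i \<and> i \<le> n - 1 \<and> g = T n i)"
  shows "Rep n (g * q :: 'k::field mpoly)"
  using assms Rep_mult Rep_Tmul by blast

lemma Rep_Gpow:
  assumes "Rep n q" "g \<in> Salg (n - 1) \<or> (\<exists>i. 1 \<le> i \<and> i \<le> n - 1 \<and> g = T n i)"
  shows "Rep n (g ^ k * q :: 'k::field mpoly)"
  by (induction k) (use assms Rep_Gmul in \<open>auto simp: mult.assoc\<close>)

lemma Rep_Gprod:
  assumes "finite F" "\<And>v. v \<in> F \<Longrightarrow> g v \<in> Salg (n - 1) \<or> (\<exists>i. 1 \<le> i \<and> i \<le> n - 1 \<and> g v = T n i)"
  shows "Rep n (\<Prod>v\<in>F. g v ^ e v :: 'k::field mpoly)"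
  using assms
proof (induction F rule: finite_induct)
  case empty then show ?case using Rep_Salg[OF Salg_one] by simp
next
  case (insert x F)
  then show ?case using Rep_Gpow[of "\<Prod>v\<in>F. g v ^ e v" "g x" "e x"] by simp
qed

end

definition sigf :: "nat \<times> nat \<Rightarrow> 'k::comm_ring_1 mpoly" where
  "sigf v = var (fst v) (snd v) - var (fst v) (rr (fst v))"

lemma sig_fix:
  assumes "q \<in> Salg N" shows "cP.evalP sigf q = q"
  using assms
proof (induction q rule: Salg.induct)
  case (const c) then show ?case by (simp add: cP.evalP_const)
next
  case (gen i v)
  then obtain c where v: "v = (\<Sum>j\<in>{1..N} - {i}. const (c j) * var i j)" and s: "(\<Sum>j\<in>{1..N} - {i}. c j) = 0"
    unfolding Vspace_def by blast
  have "cP.evalP sigf v = (\<Sum>j\<in>{1..N} - {i}. const (c j) * (var i j - var i (rr i)))"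
    by (simp add: v cP.evalP_sum cP.evalP_mult cP.evalP_const cP.evalP_var sigf_def)
  also have "\<dots> = v - (\<Sum>j\<in>{1..N} - {i}. const (c j)) * var i (rr i)"
    by (simp add: v right_diff_distrib sum_subtractf sum_distrib_right)
  also have "\<dots> = v" using s by (simp add: const_sum[symmetric] const_hom)
  finally show ?case .
qed (auto simp: cP.evalP_add cP.evalP_mult)

lemma keys_const_var: "Poly_Mapping.keys (const c * var i j :: 'k::comm_ring_1 mpoly) \<subseteq> {Poly_Mapping.single (i, j) 1}"
  by (simp add: const_def var_def mult_single)

lemma Salg_keys:
  assumes "p \<in> Salg N" shows "\<forall>mo\<in>Poly_Mapping.keys p. \<forall>v\<in>Poly_Mapping.keys mo. good N v"
  using assms
proof (induction p rule: Salg.induct)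
  case (const c) then show ?case by (simp add: const_def)
next
  case (gen i v)
  then obtain c where v: "v = (\<Sum>j\<in>{1..N} - {i}. const (c j) * var i j)"
    unfolding Vspace_def by blast
  have "Poly_Mapping.keys v \<subseteq> (\<Union>j\<in>{1..N} - {i}. {Poly_Mapping.single (i, j) 1})"
    unfolding v by (rule order.trans[OF keys_sum]) (intro UN_mono order.refl keys_const_var)
  note sub = this
  show ?case
  proof (intro ballI)
    fix mo w assume mo: "mo \<in> Poly_Mapping.keys v" and w: "w \<in> Poly_Mapping.keys mo"
    then obtain j where j: "j \<in> {1..N} - {i}" "mo = Poly_Mapping.single (i, j) 1" using sub by blast
    then have "w = (i, j)" using w by simp
    then show "good N w" using gen.hyps(1,2) j(1) by (simp add: good_def)
  qed
next
  case (add p q)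
  show ?case
  proof (intro ballI)
    fix mo w assume mo: "mo \<in> Poly_Mapping.keys (p + q)" and w: "w \<in> Poly_Mapping.keys mo"
    have "mo \<in> Poly_Mapping.keys p \<or> mo \<in> Poly_Mapping.keys q"
      using subsetD[OF keys_add[of p q] mo] by simp
    then show "good N w"
    proof
      assume "mo \<in> Poly_Mapping.keys p" then show ?thesis using add.IH(1) w by blast
    next
      assume "mo \<in> Poly_Mapping.keys q" then show ?thesis using add.IH(2) w by blast
    qed
  qed
next
  case (mult p q)
  show ?case
  proof (intro ballI)
    fix mo w assume mo: "mo \<in> Poly_Mapping.keys (p * q)" and w: "w \<in> Poly_Mapping.keys mo"
    obtain a b where ab: "mo = a + b" "a \<in> Poly_Mapping.keys p" "b \<in> Poly_Mapping.keys q"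
      using subsetD[OF keys_mult mo] by blast
    have "w \<in> Poly_Mapping.keys a \<or> w \<in> Poly_Mapping.keys b"
      using w unfolding ab(1) keys_add_nat by simp
    then show "good N w"
    proof
      assume "w \<in> Poly_Mapping.keys a" then show ?thesis using mult.IH(1) ab(2) by blast
    next
      assume "w \<in> Poly_Mapping.keys b" then show ?thesis using mult.IH(2) ab(3) by blast
    qed
  qed
qed

lemma blockdeg0_keys:
  assumes "blockdeg mo i = 0" "v \<in> Poly_Mapping.keys mo" shows "fst v \<noteq> i"
proof
  assume "fst v = i"
  have "(if fst v = i then Poly_Mapping.lookup mo v else 0) = 0"
    using assms unfolding blockdeg_def by (subst (asm) sum_eq_0_iff) auto
  then show False using \<open>fst v = i\<close> assms(2) by (simp add: in_keys_iff)
qed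

lemma spanning:
  assumes n4: "4 \<le> n" and p: "p \<in> Bminus_rep n"
  shows "Rep n (p :: 'k::field mpoly)"
proof -
  have pS: "p \<in> Salg n" and pb: "\<forall>mo\<in>Poly_Mapping.keys p. blockdeg mo n = 0"
    using p unfolding Bminus_rep_def by auto
  have "p = cP.evalP sigf p" using sig_fix[OF pS] by simp
  also have "\<dots> = (\<Sum>mo\<in>Poly_Mapping.keys p. const (Poly_Mapping.lookup p mo) *
       (\<Prod>v\<in>Poly_Mapping.keys mo. sigf v ^ Poly_Mapping.lookup mo v))"
    by (simp add: cP.evalP_def mon_eval_def)
  finally have peq: "p = \<dots>" .
  have "Rep n (\<Sum>mo\<in>Poly_Mapping.keys p. const (Poly_Mapping.lookup p mo) *
       (\<Prod>v\<in>Poly_Mapping.keys mo. sigf v ^ Poly_Mapping.lookup mo v))"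
  proof (intro Rep_sum[OF n4] Rep_mult[OF n4] Salg.const Rep_Gprod[OF n4] finite_keys)
    fix mo v assume mo: "mo \<in> Poly_Mapping.keys p" and v: "v \<in> Poly_Mapping.keys mo"
    have g: "good n v" using Salg_keys[OF pS] mo v by blast
    have "fst v \<noteq> n" using blockdeg0_keys[OF _ v] pb mo by blast
    with g have f: "1 \<le> fst v" "fst v \<le> n - 1" "snd v \<in> {1..n} - {fst v}" by (auto simp: good_def)
    show "sigf v \<in> Salg (n - 1) \<or> (\<exists>i. 1 \<le> i \<and> i \<le> n - 1 \<and> sigf v = T n i)"
    proof (cases "snd v = n")
      case True then show ?thesis using f by (auto simp: sigf_def T_def)
    next
      case False
      then have "snd v \<in> {1..n-1} - {fst v}" using f by auto
      then show ?thesis using al_Salg[OF n4 f(1,2)] by (auto simp: sigf_def al_def)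
    qed
  qed
  then show ?thesis using peq by simp
qed


unbundle fps_syntax

definition IF :: "nat \<Rightarrow> 'k::comm_ring_1 mpoly fls set" where "IF N = {f. \<forall>e. f $$ e \<in> Jp N}"
definition IFp :: "nat \<Rightarrow> 'k::comm_ring_1 mpoly fps set" where "IFp N = {f. \<forall>e. f $ e \<in> Jp N}"

lemma IF_mult: assumes "f \<in> IF N" shows "g * f \<in> IF N"
  unfolding IF_def
proof
  show "\<forall>e. (g * f) $$ e \<in> Jp N"
  proof
    fix e
    show "(g * f) $$ e \<in> Jp N" unfolding fls_times_nth(2)
      by (intro Jp_sum Jp_mult) (use assms in \<open>simp add: IF_def\<close>)
  qed
qed

lemma IF_add: "f \<in> IF N \<Longrightarrow> g \<in> IF N \<Longrightarrow> f + g \<in> IF N"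
  unfolding IF_def by (auto intro: Jp.add)
lemma IF_diff: "f \<in> IF N \<Longrightarrow> g \<in> IF N \<Longrightarrow> f - g \<in> IF N"
  unfolding IF_def by (auto intro: Jp_diff)
lemma IF_zero: "0 \<in> IF N"
  unfolding IF_def by (auto intro: Jp.zero)
lemma IF_const: "c \<in> Jp N \<Longrightarrow> fls_const c \<in> IF N"
  unfolding IF_def by (auto intro: Jp.zero)
lemma IF_fps: "f \<in> IFp N \<Longrightarrow> fps_to_fls f \<in> IF N"
  unfolding IF_def IFp_def by (auto intro: Jp.zero)

lemma IFp_mult: assumes "f \<in> IFp N" shows "f * g \<in> IFp N"
  unfolding IFp_def
proof
  show "\<forall>e. (f * g) $ e \<in> Jp N"
  proof
    fix e
    show "(f * g) $ e \<in> Jp N" unfolding fps_mult_nth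
      by (intro Jp_sum Jp_mult2) (use assms in \<open>simp add: IFp_def\<close>)
  qed
qed
lemma IFp_add: "f \<in> IFp N \<Longrightarrow> g \<in> IFp N \<Longrightarrow> f + g \<in> IFp N"
  unfolding IFp_def by (auto intro: Jp.add)
lemma IFp_constmul: "c \<in> Jp N \<Longrightarrow> fps_const c * g \<in> IFp N"
  unfolding IFp_def by (auto intro: Jp_mult2)

definition Gs :: "'a::comm_ring_1 \<Rightarrow> 'a fps" where "Gs a = Abs_fps (\<lambda>e. a ^ e)"

lemma Gs_inv: "(1 - fps_const a * fps_X) * Gs a = 1"
proof -
  have "(1 - fps_const a * fps_X) * Gs a = Gs a - fps_const a * (fps_X * Gs a)"
    by (simp add: algebra_simps)
  also have "\<dots> = 1"
  proof (rule fps_ext)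
    fix e show "(Gs a - fps_const a * (fps_X * Gs a)) $ e = 1 $ e"
      by (cases e) (simp_all add: Gs_def)
  qed
  finally show ?thesis .
qed

definition Sk :: "nat \<Rightarrow> nat \<Rightarrow> 'k::comm_ring_1 mpoly fps" where
  "Sk k i = fps_const (be k i) * fps_X * Gs (al k i)"

lemma Sk_U: "Sk k i * (1 - fps_const (al k i) * fps_X) = fps_const (be k i) * fps_X"
proof -
  have "Sk k i * (1 - fps_const (al k i) * fps_X) = fps_const (be k i) * fps_X * ((1 - fps_const (al k i) * fps_X) * Gs (al k i))"
    unfolding Sk_def by (simp only: ac_simps)
  then show ?thesis by (simp add: Gs_inv)
qed

lemma fls_X_inv_X: "fls_X_inv * fls_X = (1 :: 'a::comm_ring_1 fls)"
  by (simp add: fls_X_inv_times_conv_shift fls_X_conv_shift_1)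

lemma Xinv_S: "(fls_X_inv - fls_const (al k j)) * fps_to_fls (Sk k j) = fls_const (be k j :: 'k::comm_ring_1 mpoly)"
proof -
  define H0 where "H0 = fps_const (be k j :: 'k mpoly) * Gs (al k j)"
  define a where "a = (al k j :: 'k mpoly)"
  have S: "Sk k j = fps_X * H0" unfolding Sk_def H0_def by (simp only: ac_simps)
  have 1: "fls_X_inv * fps_to_fls (fps_X * H0) = fps_to_fls H0"
    by (simp only: fls_times_fps_to_fls fps_X_to_fls mult.assoc[symmetric] fls_X_inv_X mult_1_left)
  have 2: "fls_const a * fps_to_fls (fps_X * H0) = fps_to_fls (fps_const a * fps_X * H0)"
    by (simp only: fls_times_fps_to_fls fps_const_to_fls mult.assoc)
  have 3: "H0 - fps_const a * fps_X * H0 = fps_const (be k j) * ((1 - fps_const a * fps_X) * Gs (al k j))"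
    unfolding H0_def by (simp only: left_diff_distrib right_diff_distrib mult_1_left mult_1_right ac_simps)
  have "(fls_X_inv - fls_const a) * fps_to_fls (Sk k j)
      = fls_X_inv * fps_to_fls (fps_X * H0) - fls_const a * fps_to_fls (fps_X * H0)"
    unfolding S by (rule left_diff_distrib)
  also have "\<dots> = fps_to_fls (H0 - fps_const a * fps_X * H0)"
    unfolding 1 2 by simp
  also have "\<dots> = fls_const (be k j)" unfolding 3 by (simp add: a_def Gs_inv)
  finally show ?thesis by (simp add: a_def)
qed

lemma ring_id:
  fixes x A A' b1 b2 a1 a2 S1 S2 :: "'a::comm_ring_1"
  assumes "S1 * (1 - a1 * x) = b1 * x" "S2 * (1 - a2 * x) = b2 * x"
  shows "(A * S2 + A' * S1 + S1 * S2) * ((1 - a1 * x) * (1 - a2 * x))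
       = (A * b2 + A' * b1) * x + (b1 * b2 - A * b2 * a1 - A' * b1 * a2) * x ^ 2"
proof -
  have "(A * S2 + A' * S1 + S1 * S2) * ((1 - a1 * x) * (1 - a2 * x))
      = A * (S2 * (1 - a2 * x)) * (1 - a1 * x) + A' * (S1 * (1 - a1 * x)) * (1 - a2 * x)
        + (S1 * (1 - a1 * x)) * (S2 * (1 - a2 * x))"
    by (simp add: algebra_simps)
  also have "\<dots> = A * (b2 * x) * (1 - a1 * x) + A' * (b1 * x) * (1 - a2 * x) + (b1 * x) * (b2 * x)"
    unfolding assms ..
  also have "\<dots> = (A * b2 + A' * b1) * x + (b1 * b2 - A * b2 * a1 - A' * b1 * a2) * x ^ 2"
    by (simp add: algebra_simps power2_eq_square)
  finally show ?thesis .
qed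

definition Qf :: "nat \<Rightarrow> nat \<Rightarrow> nat \<Rightarrow> 'k::comm_ring_1 mpoly" where
  "Qf i j x = (var i x - var i j) * (var j x - var j i)"

lemma Qsym: "Qf i j x = Qf j i x"
  by (simp add: Qf_def mult.commute)

lemma be_Q: "be i j = Qf i j (ll i j)"
  by (simp add: be_def Qf_def)

lemma Qlem:
  assumes "1 \<le> i" "i \<le> N" "1 \<le> j" "j \<le> N" "i \<noteq> j" "x \<in> {1..N} - {i, j}" "y \<in> {1..N} - {i, j}"
  shows "Qf i j x - Qf i j y \<in> Jp N"
proof (cases "i < j")
  case True
  show ?thesis unfolding Qf_def
    by (rule Rgen_Jp) (unfold Rgen_def, intro CollectI exI[of _ i] exI[of _ j] exI[of _ x] exI[of _ y], use True assms in auto)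
next
  case False
  then have "j < i" using assms by auto
  have "Qf j i x - Qf j i y \<in> Jp N" unfolding Qf_def
    by (rule Rgen_Jp) (unfold Rgen_def, intro CollectI exI[of _ j] exI[of _ i] exI[of _ x] exI[of _ y], use \<open>j < i\<close> assms in auto)
  then show ?thesis by (simp add: Qsym[of i j])
qed

lemma fls_const_sum: "fls_const (\<Sum>x\<in>A. g x) = (\<Sum>x\<in>A. fls_const (g x :: 'a::comm_ring_1))"
  by (induction A rule: infinite_finite_induct) (auto simp: fls_plus_const[symmetric])

definition phif :: "nat \<Rightarrow> nat \<Rightarrow> nat \<times> nat \<Rightarrow> 'k::comm_ring_1 mpoly fls" where
  "phif n k v = (if fst v = n then 0
     else if snd v = n then
       (if fst v = k then fls_const (var k (rr k)) + fls_X_inv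
        else fls_const (var (fst v) k) + fps_to_fls (Sk k (fst v)))
     else fls_const (var (fst v) (snd v)))"

context
  fixes n k :: nat
  assumes n4: "4 \<le> n" and k1: "1 \<le> k" and k2: "k \<le> n - 1"
begin

lemma phi_Salg: assumes "q \<in> Salg (n - 1)" shows "cF.evalP (phif n k) q = fls_const q"
  using assms
proof (induction q rule: Salg.induct)
  case (const c) then show ?case by (simp add: cF.evalP_const)
next
  case (gen i v)
  then obtain c where v: "v = (\<Sum>j\<in>{1..n-1} - {i}. const (c j) * var i j)"
    unfolding Vspace_def by blast
  have "cF.evalP (phif n k) v = (\<Sum>j\<in>{1..n-1} - {i}. fls_const (const (c j)) * fls_const (var i j))"
    unfolding v cF.evalP_sum cF.evalP_mult cF.evalP_const cF.evalP_var
    by (rule sum.cong) (use gen.hyps n4 in \<open>auto simp: phif_def\<close>)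
  also have "\<dots> = fls_const v" by (simp add: v fls_const_sum)
  finally show ?case .
next
  case (add p q) then show ?case by (simp add: cF.evalP_add fls_plus_const)
next
  case (mult p q) then show ?case by (simp add: cF.evalP_mult)
qed

lemma m3: "3 \<le> n - 1" using n4 by simp

lemma Delta_lem:
  assumes "1 \<le> i" "i \<le> n - 1" "1 \<le> j" "j \<le> n - 1" "i \<noteq> j" "i \<noteq> k" "j \<noteq> k"
  defines "A \<equiv> var i k - var i j" and "A' \<equiv> var j k - var j i"
  shows "fps_const A * Sk k j + fps_const A' * Sk k i + Sk k i * Sk k j \<in> IFp (n - 1)"
proof -
  let ?b1 = "be k i :: 'a mpoly" and ?b2 = "be k j :: 'a mpoly" and ?a1 = "al k i :: 'a mpoly" and ?a2 = "al k j :: 'a mpoly"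
  let ?D = "fps_const A * Sk k j + fps_const A' * Sk k i + Sk k i * Sk k j"
  let ?U1 = "1 - fps_const ?a1 * fps_X" and ?U2 = "1 - fps_const ?a2 * fps_X"
  define e1 where "e1 = ?b2 - Qf k j i"
  define e2 where "e2 = ?b1 - Qf k i j"
  have e1: "e1 \<in> Jp (n - 1)" unfolding e1_def be_Q
    by (rule Qlem) (use assms k1 k2 ll_in[OF m3, of k j] in auto)
  have e2: "e2 \<in> Jp (n - 1)" unfolding e2_def be_Q
    by (rule Qlem) (use assms k1 k2 ll_in[OF m3, of k i] in auto)
  define c1 where "c1 = A * ?b2 + A' * ?b1"
  define c2 where "c2 = ?b1 * ?b2 - A * ?b2 * ?a1 - A' * ?b1 * ?a2"
  have c1e: "c1 = A * e1 + A' * e2"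
    unfolding c1_def e1_def e2_def A_def A'_def Qf_def by (simp add: algebra_simps)
  have c2e: "c2 = e1 * ((var k i - var k j) * A + e2 - A * ?a1) + e2 * (- ((var k i - var k j) * A') - A' * ?a2)"
    unfolding c2_def e1_def e2_def A_def A'_def Qf_def al_def by (simp add: algebra_simps)
  have c1J: "c1 \<in> Jp (n - 1)" unfolding c1e by (intro Jp.add Jp_mult e1 e2)
  have c2J: "c2 \<in> Jp (n - 1)" unfolding c2e by (intro Jp.add Jp_mult2 e1 e2)
  have R: "?D * (?U1 * ?U2) = fps_const c1 * fps_X + fps_const c2 * fps_X ^ 2"
    using ring_id[of "Sk k i" "fps_const ?a1" fps_X "fps_const ?b1" "Sk k j" "fps_const ?a2" "fps_const ?b2"
        "fps_const A" "fps_const A'"] Sk_U[of k i] Sk_U[of k j]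
    by (simp add: c1_def c2_def)
  have RI: "fps_const c1 * fps_X + fps_const c2 * fps_X ^ 2 \<in> IFp (n - 1)"
    by (intro IFp_add IFp_constmul c1J c2J)
  have "?D = ?D * (?U1 * ?U2) * (Gs ?a1 * Gs ?a2)"
  proof -
    have "?D * (?U1 * ?U2) * (Gs ?a1 * Gs ?a2) = ?D * ((?U1 * Gs ?a1) * (?U2 * Gs ?a2))"
      by (simp only: ac_simps)
    then show ?thesis by (simp add: Gs_inv)
  qed
  also have "\<dots> \<in> IFp (n - 1)" unfolding R by (rule IFp_mult[OF RI])
  finally show ?thesis .
qed

end


lemma blockdeg_sup:
  assumes "finite S" "Poly_Mapping.keys mo \<subseteq> S"
  shows "blockdeg mo i = (\<Sum>v\<in>S. if fst v = i then Poly_Mapping.lookup mo v else 0)"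
  unfolding blockdeg_def
  by (rule sum.mono_neutral_left) (use assms in \<open>auto simp: in_keys_iff\<close>)

lemma blockdeg_add: "blockdeg (a + b) i = blockdeg a i + blockdeg b i"
proof -
  let ?S = "Poly_Mapping.keys a \<union> Poly_Mapping.keys b"
  have "blockdeg (a + b) i = (\<Sum>v\<in>?S. if fst v = i then Poly_Mapping.lookup (a + b) v else 0)"
    by (rule blockdeg_sup) (simp_all add: keys_add_nat)
  also have "\<dots> = (\<Sum>v\<in>?S. (if fst v = i then Poly_Mapping.lookup a v else 0) + (if fst v = i then Poly_Mapping.lookup b v else 0))"
    by (rule sum.cong) (simp_all add: lookup_add)
  also have "\<dots> = blockdeg a i + blockdeg b i"
    by (simp add: sum.distrib blockdeg_sup[of ?S])
  finally show ?thesis .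
qed

lemma blockdeg_zero: "blockdeg 0 i = 0"
  by (simp add: blockdeg_def)

lemma blockdeg_single1: "blockdeg (Poly_Mapping.single v c) i = (if fst v = i then c else 0)"
  by (simp add: blockdeg_def)

lemma homog_one: "homog (\<lambda>_. 0) (1 :: 'k::{comm_ring_1,zero_neq_one} mpoly)"
  by (simp add: homog_def blockdeg_zero)

lemma homog_mult:
  assumes "homog d p" "homog e q" shows "homog (\<lambda>i. d i + e i) (p * q)"
  unfolding homog_def
proof (intro ballI allI)
  fix mo i assume mo: "mo \<in> Poly_Mapping.keys (p * q)"
  obtain a b where ab: "mo = a + b" "a \<in> Poly_Mapping.keys p" "b \<in> Poly_Mapping.keys q"
    using subsetD[OF keys_mult mo] by blast
  show "blockdeg mo i = d i + e i"
    using assms ab unfolding homog_def by (simp add: blockdeg_add)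
qed

lemma homog_diff:
  assumes "homog d p" "homog d q" shows "homog d (p - q)"
  using assms keys_diff[of p q] unfolding homog_def by blast

lemma homog_var: "homog (\<lambda>i'. if i' = i then 1 else 0) (var i j :: 'k::{comm_ring_1,zero_neq_one} mpoly)"
  by (simp add: homog_def var_def blockdeg_single1)

lemma homog_power:
  assumes "homog d p" shows "homog (\<lambda>i. k * d i) (p ^ k :: 'k::{comm_ring_1,zero_neq_one} mpoly)"
proof (induction k)
  case 0 then show ?case using homog_one by simp
next
  case (Suc k)
  have "homog (\<lambda>i. d i + k * d i) (p * p ^ k)" by (rule homog_mult[OF assms Suc])
  then show ?case by simp
qed

lemma homog_bb: "homog (\<lambda>i'. if i' = i then a else 0) (bb n (i, a) :: 'k::{comm_ring_1,zero_neq_one} mpoly)"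
proof -
  have "homog (\<lambda>i'. if i' = i then 1 else 0) (T n i :: 'k mpoly)"
    unfolding T_def by (intro homog_diff homog_var)
  then have "homog (\<lambda>i'. a * (if i' = i then 1 else 0)) (T n i ^ a :: 'k mpoly)"
    by (rule homog_power)
  moreover have "(\<lambda>i'. a * (if i' = i then 1 else 0)) = (\<lambda>i'. if i' = i then a else 0)" by auto
  ultimately show ?thesis by (simp add: bb_def)
qed

context
  fixes n k :: nat
  assumes n4: "4 \<le> n" and k1: "1 \<le> k" and k2: "k \<le> n - 1"
begin

lemma PE_close:
  assumes "1 \<le> i" "i < j" "j \<le> n - 1" "x \<in> {1..n} - {i, j}"
  shows "(phif n k (i, x) - phif n k (i, j)) * (phif n k (j, x) - phif n k (j, i))
          - fls_const (Qf i j (ll i j) :: 'k::comm_ring_1 mpoly) \<in> IF (n - 1)"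
proof -
  have m3: "3 \<le> n - 1" using n4 by simp
  have l0: "ll i j \<in> {1..n-1} - {i, j}" by (rule ll_in[OF m3])
  have kn: "k \<noteq> n" "i \<noteq> n" "j \<noteq> n" using k2 n4 assms by auto
  show ?thesis
  proof (cases "x = n")
    case False
    then have x: "x \<in> {1..n-1} - {i, j}" using assms by auto
    have eq: "(phif n k (i, x) - phif n k (i, j)) * (phif n k (j, x) - phif n k (j, i)) = fls_const (Qf i j x)"
      using kn False by (simp add: phif_def Qf_def fls_minus_const)
    have Q: "Qf i j x - Qf i j (ll i j) \<in> Jp (n - 1)"
      by (rule Qlem) (use assms x l0 in auto)
    show ?thesis unfolding eq fls_minus_const by (rule IF_const[OF Q])
  next
    case xn: True
    show ?thesis
    proof (cases "i = k")
      case True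
      have 1: "phif n k (i, n) - phif n k (i, j) = fls_X_inv - fls_const (al k j)"
        using True kn by (simp add: phif_def al_def fls_minus_const[symmetric] algebra_simps)
      have 2: "phif n k (j, n) - phif n k (j, i) = fps_to_fls (Sk k j)"
        using True kn assms by (simp add: phif_def)
      have eq: "(phif n k (i, x) - phif n k (i, j)) * (phif n k (j, x) - phif n k (j, i)) = fls_const (be k j)"
        unfolding xn 1 2 by (rule Xinv_S)
      show ?thesis unfolding eq using True by (simp add: be_Q IF_zero)
    next
      case ik: False
      show ?thesis
      proof (cases "j = k")
        case True
        have 1: "phif n k (j, n) - phif n k (j, i) = fls_X_inv - fls_const (al k i)"
          using True kn by (simp add: phif_def al_def fls_minus_const[symmetric] algebra_simps)
        have 2: "phif n k (i, n) - phif n k (i, j) = fps_to_fls (Sk k i)"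
          using True kn ik by (simp add: phif_def)
        have eq: "(phif n k (i, x) - phif n k (i, j)) * (phif n k (j, x) - phif n k (j, i)) = fls_const (be k i)"
          unfolding xn 1 2 by (subst mult.commute) (rule Xinv_S)
        have beq: "be k i = Qf i j (ll k i)" using True by (simp add: be_Q Qsym)
        have Q: "Qf i j (ll k i) - Qf i j (ll i j) \<in> Jp (n - 1)"
          by (rule Qlem) (use assms l0 ll_in[OF m3, of k i] True in auto)
        show ?thesis unfolding eq beq fls_minus_const by (rule IF_const[OF Q])
      next
        case jk: False
        define A where "A = (var i k - var i j :: 'k mpoly)"
        define A' where "A' = (var j k - var j i :: 'k mpoly)"
        have 1: "phif n k (i, n) - phif n k (i, j) = fls_const A + fps_to_fls (Sk k i)"
          using ik kn unfolding A_def by (simp add: phif_def fls_minus_const[symmetric] algebra_simps)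
        have 2: "phif n k (j, n) - phif n k (j, i) = fls_const A' + fps_to_fls (Sk k j)"
          using jk kn unfolding A'_def by (simp add: phif_def fls_minus_const[symmetric] algebra_simps)
        have 3: "(fls_const A + fps_to_fls (Sk k i)) * (fls_const A' + fps_to_fls (Sk k j))
           = fls_const (A * A') + fps_to_fls (fps_const A * Sk k j + fps_const A' * Sk k i + Sk k i * Sk k j)"
          by (simp add: fls_times_fps_to_fls algebra_simps)
        have AA: "A * A' = Qf i j k" unfolding A_def A'_def Qf_def ..
        have kin: "k \<in> {1..n-1} - {i, j}" using k1 k2 ik jk by auto
        have D: "fps_const A * Sk k j + fps_const A' * Sk k i + Sk k i * Sk k j \<in> IFp (n - 1)"
          unfolding A_def A'_def
          by (rule Delta_lem[OF n4 k1 k2]) (use assms ik jk in auto)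
        have Q: "Qf i j k - Qf i j (ll i j) \<in> Jp (n - 1)"
          by (rule Qlem) (use assms l0 kin in auto)
        have "(phif n k (i, x) - phif n k (i, j)) * (phif n k (j, x) - phif n k (j, i)) - fls_const (Qf i j (ll i j))
          = fls_const (Qf i j k - Qf i j (ll i j)) + fps_to_fls (fps_const A * Sk k j + fps_const A' * Sk k i + Sk k i * Sk k j)"
          unfolding xn 1 2 3 AA by (simp add: fls_minus_const[symmetric])
        also have "\<dots> \<in> IF (n - 1)" by (intro IF_add IF_const Q IF_fps D)
        finally show ?thesis .
      qed
    qed
  qed
qed

lemma phi_Rgen:
  assumes "r \<in> Rgen n" shows "cF.evalP (phif n k) r \<in> IF (n - 1)"
proof -
  obtain i j x y where r: "r = Qf i j x - Qf i j y"
    and h: "1 \<le> i" "i < j" "j \<le> n" "x \<in> {1..n} - {i, j}" "y \<in> {1..n} - {i, j}"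
    using assms unfolding Rgen_def Qf_def by blast
  let ?PE = "\<lambda>x. (phif n k (i, x) - phif n k (i, j)) * (phif n k (j, x) - phif n k (j, i))"
  have e: "cF.evalP (phif n k) r = ?PE x - ?PE y"
    unfolding r Qf_def by (simp add: cF.evalP_diff cF.evalP_mult cF.evalP_var)
  show ?thesis
  proof (cases "j = n")
    case True
    then show ?thesis unfolding e by (simp add: phif_def IF_zero)
  next
    case False
    then have j: "j \<le> n - 1" using h by auto
    have "?PE x - ?PE y = (?PE x - fls_const (Qf i j (ll i j))) - (?PE y - fls_const (Qf i j (ll i j)))"
      by simp
    also have "\<dots> \<in> IF (n - 1)" by (intro IF_diff PE_close h j)
    finally show ?thesis unfolding e .
  qed
qed

lemma phi_Rideal:
  assumes "p \<in> Rideal n" shows "cF.evalP (phif n k) p \<in> IF (n - 1)"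
  using assms
proof (induction p rule: Rideal.induct)
  case zero then show ?case by (simp add: IF_zero)
next
  case (gen a r) show ?case unfolding cF.evalP_mult by (rule IF_mult[OF phi_Rgen[OF gen(2)]])
next
  case (add p q) then show ?case by (simp add: cF.evalP_add IF_add)
qed

lemma phi_T:
  assumes "1 \<le> i" "i \<le> n - 1"
  shows "cF.evalP (phif n k) (T n i) = (if i = k then fls_X_inv
          else fps_to_fls (fps_const (var i k - var i (rr i)) + Sk k i))"
proof -
  have r: "rr i \<noteq> n" "i \<noteq> n" using n4 assms by (auto simp: rr_def)
  show ?thesis
    unfolding T_def cF.evalP_diff cF.evalP_var
    using r by (simp add: phif_def fls_minus_const[symmetric] algebra_simps)
qed

lemma phi_bb_neg:
  assumes "1 \<le> i" "i \<le> n - 1" "0 < a"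
  shows "cF.evalP (phif n k) (bb n (i, a')) $$ (- int a) = (if (i, a') = (k, a) then 1 else 0)"
proof (cases "i = k")
  case True
  then show ?thesis unfolding bb_def using assms
    by (simp add: cF.evalP_power phi_T)
next
  case False
  have eq: "cF.evalP (phif n k) (bb n (i, a')) = fps_to_fls ((fps_const (var i k - var i (rr i)) + Sk k i) ^ a')"
    unfolding bb_def fst_conv snd_conv cF.evalP_power phi_T[OF assms(1,2)] by (simp add: False fps_to_fls_power)
  show ?thesis unfolding eq by (simp only: fps_to_fls_nth) (use assms False in simp)
qed

lemma phi_lin:
  assumes "c0 \<in> Salg (n - 1)" "\<forall>x. c x \<in> Salg (n - 1)"
  shows "cF.evalP (phif n k) (c0 * 1 + (\<Sum>x\<in>S. c x * bb n x)) $$ e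
       = fls_const c0 $$ e + (\<Sum>x\<in>S. c x * cF.evalP (phif n k) (bb n x) $$ e)"
proof -
  have cx: "cF.evalP (phif n k) (c x) = fls_const (c x)" for x
    using phi_Salg[OF n4 k1 k2] assms(2) by blast
  show ?thesis
    by (simp add: cF.evalP_add cF.evalP_mult cF.evalP_sum cF.evalP_one phi_Salg[OF n4 k1 k2 assms(1)] cx fls_nth_sum)
qed

lemma extract_neg:
  assumes c0: "c0 \<in> Salg (n - 1)" and c: "\<forall>x. c x \<in> Salg (n - 1)"
    and S: "{x. c x \<noteq> 0} \<subseteq> shift_idx n" and fin: "finite {x. c x \<noteq> 0}"
    and X: "c0 * 1 + (\<Sum>x\<in>{x. c x \<noteq> 0}. c x * bb n x) \<in> Rideal n" and a: "0 < a"
  shows "c (k, a) \<in> Jp (n - 1)"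
proof -
  let ?S = "{x. c x \<noteq> 0}"
  have "cF.evalP (phif n k) (c0 * 1 + (\<Sum>x\<in>?S. c x * bb n x)) $$ (- int a) \<in> Jp (n - 1)"
    using phi_Rideal[OF X] unfolding IF_def by blast
  also have "cF.evalP (phif n k) (c0 * 1 + (\<Sum>x\<in>?S. c x * bb n x)) $$ (- int a)
      = (\<Sum>x\<in>?S. if x = (k, a) then c x else 0)"
    unfolding phi_lin[OF c0 c] using a
  proof (simp, intro sum.cong refl)
    fix x assume x: "x \<in> ?S"
    then have "1 \<le> fst x" "fst x \<le> n - 1" using S by (auto simp: shift_idx_def)
    then have "cF.evalP (phif n k) (bb n (fst x, snd x)) $$ (- int a) = (if (fst x, snd x) = (k, a) then 1 else 0)"
      by (rule phi_bb_neg) (use a in auto)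
    then have h: "cF.evalP (phif n k) (bb n x) $$ (- int a) = (if x = (k, a) then 1 else 0)"
      by simp
    show "c x * cF.evalP (phif n k) (bb n x) $$ (- int a) = (if x = (k, a) then c x else 0)"
      unfolding h by simp
  qed
  also have "\<dots> = c (k, a)"
    by (cases "c (k, a) = 0") (simp_all add: sum.delta[OF fin])
  finally show ?thesis .
qed

lemma extract_0:
  assumes c0: "c0 \<in> Salg (n - 1)" and c: "\<forall>x. c x \<in> Salg (n - 1)"
    and X: "c0 * 1 + (\<Sum>x\<in>{x. c x \<noteq> 0}. c x * bb n x) \<in> Rideal n"
    and cJ: "\<forall>x. c x \<in> Jp (n - 1)"
  shows "c0 \<in> Jp (n - 1)"
proof -
  let ?S = "{x. c x \<noteq> 0}"
  let ?s = "\<Sum>x\<in>?S. c x * cF.evalP (phif n k) (bb n x) $$ 0"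
  have "cF.evalP (phif n k) (c0 * 1 + (\<Sum>x\<in>?S. c x * bb n x)) $$ 0 \<in> Jp (n - 1)"
    using phi_Rideal[OF X] unfolding IF_def by blast
  then have "c0 + ?s \<in> Jp (n - 1)" unfolding phi_lin[OF c0 c] by simp
  moreover have "?s \<in> Jp (n - 1)" by (intro Jp_sum Jp_mult2) (use cJ in auto)
  ultimately have "(c0 + ?s) - ?s \<in> Jp (n - 1)" by (rule Jp_diff)
  then show ?thesis by simp
qed

end

theorem lemma4p2:
  fixes n :: nat
  assumes "4 \<le> n"
  shows "\<exists>(b0 :: 'k::field mpoly) (b :: nat \<times> nat \<Rightarrow> 'k mpoly).
    b0 \<in> Salg n \<and> homog (\<lambda>_. 0) b0 \<and>
    (\<forall>(i, a)\<in>shift_idx n. b (i, a) \<in> Salg n \<and>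
        homog (\<lambda>i'. if i' = i then a else 0) (b (i, a))) \<and>
    (\<forall>p\<in>Bminus_rep n. \<exists>c0 c. c0 \<in> Salg (n - 1) \<and>
        finite {x. c x \<noteq> 0} \<and> {x. c x \<noteq> 0} \<subseteq> shift_idx n \<and>
        (\<forall>x. c x \<in> Salg (n - 1)) \<and>
        p - (c0 * b0 + (\<Sum>x\<in>{x. c x \<noteq> 0}. c x * b x)) \<in> Rideal n) \<and>
    (\<forall>c0 c. c0 \<in> Salg (n - 1) \<and> finite {x. c x \<noteq> 0} \<and> {x. c x \<noteq> 0} \<subseteq> shift_idx n \<and>
        (\<forall>x. c x \<in> Salg (n - 1)) \<and>
        c0 * b0 + (\<Sum>x\<in>{x. c x \<noteq> 0}. c x * b x) \<in> Rideal n \<longrightarrow>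
        c0 \<in> Rideal (n - 1) \<and> (\<forall>x. c x \<in> Rideal (n - 1)))"
proof (intro exI[of _ 1] exI[of _ "bb n"] conjI)
  show "(1 :: 'k mpoly) \<in> Salg n" by (rule Salg_one)
  show "homog (\<lambda>_. 0) (1 :: 'k mpoly)" by (rule homog_one)
  show "\<forall>(i, a)\<in>shift_idx n. (bb n (i, a) :: 'k mpoly) \<in> Salg n \<and> homog (\<lambda>i'. if i' = i then a else 0) (bb n (i, a) :: 'k mpoly)"
  proof -
    have "(bb n (i, a) :: 'k mpoly) \<in> Salg n \<and> homog (\<lambda>i'. if i' = i then a else 0) (bb n (i, a) :: 'k mpoly)"
      if ia: "(i, a) \<in> shift_idx n" for i a
    proof
      from ia have i: "1 \<le> i" "i \<le> n - 1" by (auto simp: shift_idx_def)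
      have "(T n i ^ a :: 'k mpoly) \<in> Salg n" by (rule Salg_power[OF T_Salg[OF assms i]])
      then show "bb n (i, a) \<in> (Salg n :: 'k mpoly set)" by (simp add: bb_def)
      show "homog (\<lambda>i'. if i' = i then a else 0) (bb n (i, a) :: 'k mpoly)" by (rule homog_bb)
    qed
    then show ?thesis by blast
  qed
  show "\<forall>p\<in>(Bminus_rep n :: 'k mpoly set). \<exists>c0 c. c0 \<in> Salg (n - 1) \<and>
        finite {x. c x \<noteq> 0} \<and> {x. c x \<noteq> 0} \<subseteq> shift_idx n \<and>
        (\<forall>x. c x \<in> Salg (n - 1)) \<and>
        p - (c0 * 1 + (\<Sum>x\<in>{x. c x \<noteq> 0}. c x * bb n x)) \<in> Rideal n"
  proof
    fix p :: "'k mpoly" assume "p \<in> Bminus_rep n"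
    then have "Rep n p" by (rule spanning[OF assms])
    then show "\<exists>c0 c. c0 \<in> Salg (n - 1) \<and>
        finite {x. c x \<noteq> 0} \<and> {x. c x \<noteq> 0} \<subseteq> shift_idx n \<and>
        (\<forall>x. c x \<in> Salg (n - 1)) \<and>
        p - (c0 * 1 + (\<Sum>x\<in>{x. c x \<noteq> 0}. c x * bb n x)) \<in> Rideal n"
      unfolding Rep_def .
  qed
  show "\<forall>c0 c. c0 \<in> Salg (n - 1) \<and> finite {x. c x \<noteq> 0} \<and> {x. c x \<noteq> 0} \<subseteq> shift_idx n \<and>
        (\<forall>x. c x \<in> Salg (n - 1)) \<and>
        c0 * 1 + (\<Sum>x\<in>{x. c x \<noteq> 0}. c x * bb n x) \<in> Rideal n \<longrightarrow>
        c0 \<in> Rideal (n - 1) \<and> (\<forall>x. c x \<in> (Rideal (n - 1) :: 'k mpoly set))"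
  proof (intro allI impI)
    fix c0 :: "'k mpoly" and c :: "nat \<times> nat \<Rightarrow> 'k mpoly"
    assume h: "c0 \<in> Salg (n - 1) \<and> finite {x. c x \<noteq> 0} \<and> {x. c x \<noteq> 0} \<subseteq> shift_idx n \<and>
        (\<forall>x. c x \<in> Salg (n - 1)) \<and> c0 * 1 + (\<Sum>x\<in>{x. c x \<noteq> 0}. c x * bb n x) \<in> Rideal n"
    have m2: "2 \<le> n - 1" using assms by simp
    have cJ: "\<forall>x. c x \<in> Jp (n - 1)"
    proof
      fix x show "c x \<in> Jp (n - 1)"
      proof (cases "c x = 0")
        case True then show ?thesis by (simp add: Jp.zero)
      next
        case False
        then have "x \<in> shift_idx n" using h by blast
        then obtain i a where x: "x = (i, a)" "1 \<le> i" "i \<le> n - 1" "0 < a"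
          by (cases x) (auto simp: shift_idx_def)
        show ?thesis unfolding x(1)
          by (rule extract_neg[OF assms x(2,3)]) (use h x in auto)
      qed
    qed
    have c0J: "c0 \<in> Jp (n - 1)"
      by (rule extract_0[OF assms order.refl]) (use h cJ assms in auto)
    show "c0 \<in> Rideal (n - 1) \<and> (\<forall>x. c x \<in> Rideal (n - 1))"
      using Jp_Salg_Rideal[OF m2] h c0J cJ by blast
  qed
qed


end
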